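(* Let $f:\mathcal D\subset\Omega\times(0,\infty)\to\Omega\times(0,\infty)$ be a measure-preserving embedding of the form $f(\omega,r)=(\omega+\psi(F(\omega,r)),\,r+G(\omega,r))$ with $F,G:\mathcal D\to\mathbb R$ continuous. Suppose there is a function $W\in\mathcal C^1_\psi(\Omega\times(0,\infty))$ and constants $\beta,\delta>0$ with $$0<\beta\le\partial_rW(\omega,r)\le\delta\quad\text{for all }\omega\in\Omega,\ r\in(0,\infty),$$ and $$W(f(\omega,r))\le W(\omega,r)+k(r)\quad\text{for all }(\omega,r)\in\mathcal D,$$ where $k:(0,\infty)\to\mathbb R$ is decreasing, bounded and satisfies $\lim_{r\to\infty}k(r)=0$. Then for $\mu_\Omega$-almost every $\omega\in\Omega$ the set $E_\omega\subset\mathbb R\times(0,\infty)$ has two-dimensional Lebesgue measure zero.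
   Context: $\Omega$ is a commutative (written additively), compact, metrizable topological group, and $\psi:\mathbb R\to\Omega$ is a continuous group homomorphism with $\psi(\mathbb R)$ dense in $\Omega$. $\mu_\Omega$ is the Haar probability measure of $\Omega$, $\lambda$ is Lebesgue measure on $\mathbb R$, $\lambda^2$ on $\mathbb R^2$. For $U:\Omega\to\mathbb R$ set $\partial_\psi U(\omega)=\lim_{t\to0}\frac{U(\omega+\psi(t))-U(\omega)}{t}$; $\mathcal C^1_\psi(\Omega)$ is the space of continuous $U$ for which $\partial_\psi U$ exists at every point and is continuous on $\Omega$. $\mathcal C^1_\psi(\Omega\times(0,\infty))$ denotes the functions $W(\omega,r)$ with $W(\cdot,r)\in\mathcal C^1_\psi(\Omega)$ for every $r$ and $W(\omega,\cdot)\in\mathcal C^1(0,\infty)$ for every $\omega$. A map $f:\mathcal D\to\Omega\times(0,\infty)$ with $\mathcal D\subset\Omega\times(0,\infty)$ open is a measure-preserving embedding if it is continuous, injective and $(\mu_\Omega\otimes\lambda)(f(\mathcal B))=(\mu_\Omega\otimes\lambda)(\mathcal B)$ for all Borel $\mathcal B\subset\mathcal D$. For $\omega\in\Omega$ let $\psi_\omega(t)=\omega+\psi(t)$, $D_\omega=\{(t,r)\in\mathbb R\times(0,\infty):(\psi_\omega(t),r)\in\mathcal D\}$ and $f_\omega:D_\omega\to\mathbb R\times(0,\infty)$, $f_\omega(t,r)=(t+F(\psi_\omega(t),r),\,r+G(\psi_\omega(t),r))$. Set $D_{\omega,1}=D_\omega$, $D_{\omega,n+1}=f_\omega^{-1}(D_{\omega,n})$,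 $D_{\omega,\infty}=\bigcap_{n\ge1}D_{\omega,n}$, and for $(t_0,r_0)\in D_{\omega,\infty}$ write $(t_n,r_n)=f_\omega^n(t_0,r_0)$. The escaping set is $E_\omega=\{(t_0,r_0)\in D_{\omega,\infty}:\lim_{n\to\infty}r_n=\infty\}$. *)

theory Defs
  imports "HOL-Probability.Probability"
begin

definition psi_has_deriv :: "(real \<Rightarrow> 'a::{ab_group_add,topological_space}) \<Rightarrow> ('a \<Rightarrow> real) \<Rightarrow> 'a \<Rightarrow> real \<Rightarrow> bool" where
  "psi_has_deriv \<psi> U \<omega> L \<longleftrightarrow> ((\<lambda>t. (U (\<omega> + \<psi> t) - U \<omega>) / t) \<longlongrightarrow> L) (at 0)"

definition psi_deriv :: "(real \<Rightarrow> 'a::{ab_group_add,topological_space}) \<Rightarrow> ('a \<Rightarrow> real) \<Rightarrow> 'a \<Rightarrow> real" where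
  "psi_deriv \<psi> U \<omega> = Lim (at 0) (\<lambda>t. (U (\<omega> + \<psi> t) - U \<omega>) / t)"

definition C1_psi :: "(real \<Rightarrow> 'a::{ab_group_add,topological_space}) \<Rightarrow> ('a \<Rightarrow> real) \<Rightarrow> bool" where
  "C1_psi \<psi> U \<longleftrightarrow> continuous_on UNIV U \<and> (\<forall>\<omega>. \<exists>L. psi_has_deriv \<psi> U \<omega> L)
     \<and> continuous_on UNIV (psi_deriv \<psi> U)"

definition C1_psi_half :: "(real \<Rightarrow> 'a::{ab_group_add,topological_space}) \<Rightarrow> ('a \<Rightarrow> real \<Rightarrow> real) \<Rightarrow> bool" where
  "C1_psi_half \<psi> W \<longleftrightarrow> (\<forall>r>0. C1_psi \<psi> (\<lambda>\<omega>. W \<omega> r))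
     \<and> (\<forall>\<omega>. \<exists>W'. (\<forall>r>0. (W \<omega> has_real_derivative W' r) (at r)) \<and> continuous_on {0<..} W')"

definition f_om :: "(real \<Rightarrow> 'a::ab_group_add) \<Rightarrow> ('a \<times> real \<Rightarrow> real) \<Rightarrow> ('a \<times> real \<Rightarrow> real) \<Rightarrow> 'a
    \<Rightarrow> real \<times> real \<Rightarrow> real \<times> real" where
  "f_om \<psi> F G \<omega> = (\<lambda>(t, r). (t + F (\<omega> + \<psi> t, r), r + G (\<omega> + \<psi> t, r)))"

definition D_om :: "(real \<Rightarrow> 'a::ab_group_add) \<Rightarrow> ('a \<times> real) set \<Rightarrow> 'a \<Rightarrow> (real \<times> real) set" where
  "D_om \<psi> D \<omega> = {(t, r). r > 0 \<and> (\<omega> + \<psi> t, r) \<in> D}"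

text \<open>D_om_n ... \<omega> n is the paper's D_{omega,n+1}; preimages are taken inside the domain D_omega.\<close>
primrec D_om_n :: "(real \<Rightarrow> 'a::ab_group_add) \<Rightarrow> ('a \<times> real) set \<Rightarrow> ('a \<times> real \<Rightarrow> real) \<Rightarrow> ('a \<times> real \<Rightarrow> real)
    \<Rightarrow> 'a \<Rightarrow> nat \<Rightarrow> (real \<times> real) set" where
  "D_om_n \<psi> D F G \<omega> 0 = D_om \<psi> D \<omega>"
| "D_om_n \<psi> D F G \<omega> (Suc n) = {p \<in> D_om \<psi> D \<omega>. f_om \<psi> F G \<omega> p \<in> D_om_n \<psi> D F G \<omega> n}"

definition D_om_inf :: "(real \<Rightarrow> 'a::ab_group_add) \<Rightarrow> ('a \<times> real) set \<Rightarrow> ('a \<times> real \<Rightarrow> real) \<Rightarrow> ('a \<times> real \<Rightarrow> real)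
    \<Rightarrow> 'a \<Rightarrow> (real \<times> real) set" where
  "D_om_inf \<psi> D F G \<omega> = (\<Inter>n. D_om_n \<psi> D F G \<omega> n)"

definition escaping_set :: "(real \<Rightarrow> 'a::ab_group_add) \<Rightarrow> ('a \<times> real) set \<Rightarrow> ('a \<times> real \<Rightarrow> real) \<Rightarrow> ('a \<times> real \<Rightarrow> real)
    \<Rightarrow> 'a \<Rightarrow> (real \<times> real) set" where
  "escaping_set \<psi> D F G \<omega> = {p \<in> D_om_inf \<psi> D F G \<omega>.
      filterlim (\<lambda>n. snd ((f_om \<psi> F G \<omega> ^^ n) p)) at_top sequentially}"

end

theory Submission
  imports Defs
begin

lemma countable_basis_compact:
  assumes "compact (UNIV::'a::metric_space set)"
  shows "\<exists>B::'a set set. countable B \<and> topological_basis B"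
proof -
  have "\<forall>m::nat. \<exists>C. finite C \<and> UNIV \<subseteq> (\<Union>c\<in>C. ball (c::'a) (1 / Suc m))"
  proof
    fix m :: nat
    have "UNIV \<subseteq> (\<Union>c\<in>UNIV. ball (c::'a) (1 / Suc m))" by auto
    from compactE_image[OF assms _ this]
    show "\<exists>C. finite C \<and> UNIV \<subseteq> (\<Union>c\<in>C. ball (c::'a) (1 / Suc m))" by (metis open_ball)
  qed
  then obtain C :: "nat \<Rightarrow> 'a set" where C: "\<And>m. finite (C m)" "\<And>m. UNIV \<subseteq> (\<Union>c\<in>C m. ball c (1 / Suc m))"
    by metis
  define B where "B = (\<Union>m. (\<lambda>c. ball c (1 / Suc m)) ` C m)"
  have "countable B" unfolding B_def by (rule countable_UN) (auto intro: countable_finite C(1))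
  moreover have "topological_basis B"
  proof (subst topological_basis_iff)
    show "\<And>B'. B' \<in> B \<Longrightarrow> open B'" unfolding B_def by auto
    show "\<forall>O'. open O' \<longrightarrow> (\<forall>x\<in>O'. \<exists>B'\<in>B. x \<in> B' \<and> B' \<subseteq> O')"
    proof (intro allI impI ballI)
      fix O' :: "'a set" and x :: 'a assume "open O'" "x \<in> O'"
      then obtain e where e: "e > 0" "ball x e \<subseteq> O'" by (meson open_contains_ball)
      obtain m :: nat where m: "1 / Suc m < e / 2"
        by (metis e(1) half_gt_zero_iff nat_approx_posE)
      have "x \<in> (\<Union>c\<in>C m. ball c (1 / Suc m))" using C(2)[of m] by blast
      then obtain c where c: "c \<in> C m" "x \<in> ball c (1 / Suc m)" by blast
      have "ball c (1 / Suc m) \<subseteq> O'"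
      proof
        fix y assume "y \<in> ball c (1 / Suc m)"
        then have h1: "dist c y < 1 / Suc m" by simp
        have h2: "dist x c < 1 / Suc m" using c(2) by (simp add: dist_commute)
        have "dist x y \<le> dist x c + dist c y" by (rule dist_triangle)
        then have "dist x y < e" using h1 h2 m by linarith
        then show "y \<in> O'" using e by auto
      qed
      then show "\<exists>B'\<in>B. x \<in> B' \<and> B' \<subseteq> O'" using c unfolding B_def by blast
    qed
  qed
  ultimately show ?thesis by blast
qed

lemma basis_Union_UNIV: "topological_basis B \<Longrightarrow> \<Union>B = UNIV"
proof -
  assume "topological_basis B"
  then obtain B' where "B' \<subseteq> B" "\<Union>B' = UNIV" unfolding topological_basis_def using open_UNIV by blast
  then show ?thesis by blast
qed

lemma sets_borel_prod_basis:
  fixes Ba :: "'a::topological_space set set" and Bb :: "'b::topological_space set set"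
  assumes a: "countable Ba" "topological_basis Ba" and b: "countable Bb" "topological_basis Bb"
  shows "sets (borel \<Otimes>\<^sub>M borel) = sets (borel :: ('a \<times> 'b) measure)"
proof -
  have eq: "(borel :: ('a \<times> 'b) measure) = sigma UNIV ((\<lambda>(a, b). a \<times> b) ` (Ba \<times> Bb))"
    by (rule borel_eq_countable_basis) (auto intro!: topological_basis_prod a b)
  have sa: "sets (borel :: 'a measure) = sigma_sets UNIV Ba"
    by (simp add: borel_eq_countable_basis[OF a] sets_measure_of)
  have sb: "sets (borel :: 'b measure) = sigma_sets UNIV Bb"
    by (simp add: borel_eq_countable_basis[OF b] sets_measure_of)
  have "sets (borel \<Otimes>\<^sub>M borel) = sets (sigma (space (borel::'a measure) \<times> space (borel::'b measure)) {x \<times> y | x y. x \<in> Ba \<and> y \<in> Bb})"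
    apply (rule sets_pair_eq[where Ca=Ba and Cb=Bb])
    apply (simp_all add: sa sb a b basis_Union_UNIV[OF a(2)] basis_Union_UNIV[OF b(2)])
    done
  also have "{x \<times> y | x y. x \<in> Ba \<and> y \<in> Bb} = (\<lambda>(a, b). a \<times> b) ` (Ba \<times> Bb)" by auto
  finally show ?thesis using eq by simp
qed

locale setting =
  fixes \<mu> :: "'a::{metric_space, ab_group_add} measure"
    and \<psi> :: "real \<Rightarrow> 'a"
    and D :: "('a \<times> real) set"
    and F G :: "'a \<times> real \<Rightarrow> real"
    and W :: "'a \<Rightarrow> real \<Rightarrow> real"
    and k :: "real \<Rightarrow> real"
    and \<beta> \<delta> :: real
  assumes compact_Omega: "compact (UNIV :: 'a set)"
    and psi_hom: "\<And>s t. \<psi> (s + t) = \<psi> s + \<psi> t"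
    and haar_prob: "prob_space \<mu>"
    and haar_sets: "sets \<mu> = sets borel"
    and haar_inv: "\<And>a A. A \<in> sets borel \<Longrightarrow> emeasure \<mu> ((\<lambda>x. a + x) ` A) = emeasure \<mu> A"
    and D_open: "open D"
    and D_sub: "D \<subseteq> UNIV \<times> {0<..}"
    and f_maps: "\<And>\<omega> r. (\<omega>, r) \<in> D \<Longrightarrow> r + G (\<omega>, r) > 0"
    and f_cont: "continuous_on D (\<lambda>(\<omega>, r). (\<omega> + \<psi> (F (\<omega>, r)), r + G (\<omega>, r)))"
    and f_inj: "inj_on (\<lambda>(\<omega>, r). (\<omega> + \<psi> (F (\<omega>, r)), r + G (\<omega>, r))) D"
    and f_mp: "\<And>B. B \<in> sets (borel :: ('a \<times> real) measure) \<Longrightarrow> B \<subseteq> D \<Longrightarrow>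
        emeasure (\<mu> \<Otimes>\<^sub>M lborel) ((\<lambda>(\<omega>, r). (\<omega> + \<psi> (F (\<omega>, r)), r + G (\<omega>, r))) ` B)
          = emeasure (\<mu> \<Otimes>\<^sub>M lborel) B"
    and W_C1: "C1_psi_half \<psi> W"
    and beta_pos: "\<beta> > 0" and delta_pos: "\<delta> > 0"
    and W_r_bounds: "\<And>\<omega> r. r > 0 \<Longrightarrow> \<beta> \<le> deriv (W \<omega>) r \<and> deriv (W \<omega>) r \<le> \<delta>"
    and W_ineq: "\<And>\<omega> r. (\<omega>, r) \<in> D \<Longrightarrow>
        W (\<omega> + \<psi> (F (\<omega>, r))) (r + G (\<omega>, r)) \<le> W \<omega> r + k r"
    and k_decr: "antimono_on {0<..} k"
    and k_bdd: "bounded (k ` {0<..})"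
    and k_lim: "(k \<longlongrightarrow> 0) at_top"
begin

definition fm :: "'a \<times> real \<Rightarrow> 'a \<times> real" where
  "fm = (\<lambda>(\<omega>, r). (\<omega> + \<psi> (F (\<omega>, r)), r + G (\<omega>, r)))"

definition Wp :: "'a \<times> real \<Rightarrow> real" where "Wp p = W (fst p) (snd p)"

lemma W_deriv: "r > 0 \<Longrightarrow> (W \<omega> has_real_derivative deriv (W \<omega>) r) (at r)"
proof -
  assume r: "r > 0"
  from W_C1 obtain W' where W': "\<And>r. r > 0 \<Longrightarrow> (W \<omega> has_real_derivative W' r) (at r)"
    unfolding C1_psi_half_def by blast
  have "deriv (W \<omega>) r = W' r" using W'[OF r] by (rule DERIV_imp_deriv)
  then show ?thesis using W'[OF r] by simp
qed

lemma W_incr: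
  assumes "0 < r" "r \<le> s"
  shows "\<beta> * (s - r) \<le> W \<omega> s - W \<omega> r \<and> W \<omega> s - W \<omega> r \<le> \<delta> * (s - r)"
proof (cases "r = s")
  case True then show ?thesis by simp
next
  case False
  with assms have "r < s" by simp
  from MVT2[OF this, of "W \<omega>" "deriv (W \<omega>)"] obtain z where
    z: "r < z" "z < s" "W \<omega> s - W \<omega> r = (s - r) * deriv (W \<omega>) z"
    using W_deriv assms by force
  have "z > 0" using z assms by simp
  from W_r_bounds[OF this, of \<omega>] have "\<beta> \<le> deriv (W \<omega>) z" "deriv (W \<omega>) z \<le> \<delta>" by auto
  moreover have "s - r \<ge> 0" using assms by simp
  ultimately show ?thesis using z(3)
    by (metis mult.commute mult_right_mono)
qed

lemma W_lip: "0 < r \<Longrightarrow> 0 < s \<Longrightarrow> \<bar>W \<omega> s - W \<omega> r\<bar> \<le> \<delta> * \<bar>s - r\<bar>"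
proof -
  assume "0 < r" "0 < s"
  show ?thesis
  proof (cases "r \<le> s")
    case True
    have h: "\<beta> * (s - r) \<le> W \<omega> s - W \<omega> r" "W \<omega> s - W \<omega> r \<le> \<delta> * (s - r)"
      using W_incr[OF \<open>0 < r\<close> True, of \<omega>] by auto
    have "0 \<le> \<beta> * (s - r)" using beta_pos True by simp
    then have "\<bar>W \<omega> s - W \<omega> r\<bar> = W \<omega> s - W \<omega> r" using h by simp
    moreover have "\<bar>s - r\<bar> = s - r" using True by simp
    ultimately show ?thesis using h by simp
  next
    case False then have "s \<le> r" by simp
    have h: "\<beta> * (r - s) \<le> W \<omega> r - W \<omega> s" "W \<omega> r - W \<omega> s \<le> \<delta> * (r - s)"
      using W_incr[OF \<open>0 < s\<close> \<open>s \<le> r\<close>, of \<omega>] by auto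
    have "0 \<le> \<beta> * (r - s)" using beta_pos \<open>s \<le> r\<close> by simp
    then have "\<bar>W \<omega> s - W \<omega> r\<bar> = W \<omega> r - W \<omega> s" using h by simp
    moreover have "\<bar>s - r\<bar> = r - s" using \<open>s \<le> r\<close> by simp
    ultimately show ?thesis using h by simp
  qed
qed

lemma W_cont_omega: "continuous_on UNIV (\<lambda>\<omega>. W \<omega> r)" if "r > 0"
  using W_C1 that unfolding C1_psi_half_def C1_psi_def by blast

lemma Wp_cont: "continuous_on (UNIV \<times> {0<..}) Wp"
  unfolding continuous_on_iff
proof (intro ballI allI impI)
  fix p :: "'a \<times> real" and e :: real
  assume p: "p \<in> UNIV \<times> {0<..}" and e: "e > 0"
  obtain \<omega>0 r0 where p_eq: "p = (\<omega>0, r0)" by (cases p)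
  have r0: "r0 > 0" using p p_eq by auto
  from W_cont_omega[OF r0] e obtain d1 where d1: "d1 > 0"
    "\<And>\<omega>. dist \<omega> \<omega>0 < d1 \<Longrightarrow> dist (W \<omega> r0) (W \<omega>0 r0) < e / 2"
    unfolding continuous_on_iff by (metis UNIV_I half_gt_zero)
  define d where "d = min d1 (e / (2 * \<delta>))"
  have d: "d > 0" using d1 e delta_pos by (simp add: d_def)
  show "\<exists>d>0. \<forall>x'\<in>UNIV \<times> {0<..}. dist x' p < d \<longrightarrow> dist (Wp x') (Wp p) < e"
  proof (intro exI[of _ d] conjI ballI impI d)
    fix q :: "'a \<times> real" assume q: "q \<in> UNIV \<times> {0<..}" "dist q p < d"
    obtain \<omega> r where q_eq: "q = (\<omega>, r)" by (cases q)
    have r: "r > 0" using q q_eq by auto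
    have "dist \<omega> \<omega>0 \<le> dist q p" using dist_fst_le[of q p] by (simp add: q_eq p_eq)
    then have h1: "dist (W \<omega> r0) (W \<omega>0 r0) < e / 2" using d1 q(2) unfolding d_def by simp
    have "dist r r0 \<le> dist q p" using dist_snd_le[of q p] by (simp add: q_eq p_eq)
    then have "\<bar>r - r0\<bar> < e / (2 * \<delta>)" using q(2) unfolding d_def by (simp add: dist_real_def)
    then have "\<delta> * \<bar>r - r0\<bar> < e / 2" using delta_pos by (simp add: field_simps)
    then have h2: "\<bar>W \<omega> r - W \<omega> r0\<bar> < e / 2" using W_lip[OF r0 r, of \<omega>] by linarith
    show "dist (Wp q) (Wp p) < e" using h1 h2 abs_triangle_ineq[of "W \<omega> r - W \<omega> r0" "W \<omega> r0 - W \<omega>0 r0"]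
      unfolding Wp_def q_eq p_eq dist_real_def by simp
  qed
qed

end

lemma filterlim_at_top_nat_iff:
  fixes f :: "nat \<Rightarrow> real"
  shows "filterlim f at_top sequentially \<longleftrightarrow> (\<forall>m::nat. \<exists>N. \<forall>n\<ge>N. real m \<le> f n)"
proof
  assume "filterlim f at_top sequentially"
  then show "\<forall>m::nat. \<exists>N. \<forall>n\<ge>N. real m \<le> f n"
    unfolding filterlim_at_top eventually_sequentially by blast
next
  assume H: "\<forall>m::nat. \<exists>N. \<forall>n\<ge>N. real m \<le> f n"
  show "filterlim f at_top sequentially"
    unfolding filterlim_at_top eventually_sequentially
  proof
    fix Z :: real
    obtain m :: nat where "Z \<le> real m" using real_arch_simple by blast
    with H show "\<exists>N. \<forall>n\<ge>N. Z \<le> f n" by (meson order_trans)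
  qed
qed

lemma sets_filterlim_at_top:
  fixes u :: "nat \<Rightarrow> 'b \<Rightarrow> real"
  assumes [measurable]: "\<And>n. u n \<in> borel_measurable M"
  shows "{x \<in> space M. filterlim (\<lambda>n. u n x) at_top sequentially} \<in> sets M"
  unfolding filterlim_at_top_nat_iff by measurable

context setting
begin

lemma fm_cont: "continuous_on D fm" using f_cont unfolding fm_def .
lemma fm_inj: "inj_on fm D" using f_inj unfolding fm_def .

primrec Dn :: "nat \<Rightarrow> ('a \<times> real) set" where
  "Dn 0 = D" | "Dn (Suc n) = {p \<in> D. fm p \<in> Dn n}"

definition E :: "('a \<times> real) set" where
  "E = {p \<in> (\<Inter>n. Dn n). filterlim (\<lambda>n. snd ((fm ^^ n) p)) at_top sequentially}"

definition lift :: "'a \<Rightarrow> real \<times> real \<Rightarrow> 'a \<times> real" where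
  "lift \<omega> = (\<lambda>(t, r). (\<omega> + \<psi> t, r))"

lemma fm_lift: "fm (lift \<omega> p) = lift \<omega> (f_om \<psi> F G \<omega> p)"
  by (cases p) (simp add: fm_def lift_def f_om_def psi_hom add.assoc)

lemma fm_iter_lift: "(fm ^^ n) (lift \<omega> p) = lift \<omega> ((f_om \<psi> F G \<omega> ^^ n) p)"
  by (induction n) (simp_all add: fm_lift)

lemma snd_lift[simp]: "snd (lift \<omega> p) = snd p"
  by (cases p) (simp add: lift_def)

lemma D_om_lift: "D_om \<psi> D \<omega> = lift \<omega> -` D"
  using D_sub by (auto simp: D_om_def lift_def)

lemma D_om_n_lift: "D_om_n \<psi> D F G \<omega> n = lift \<omega> -` Dn n"
  by (induction n) (auto simp: D_om_lift fm_lift[symmetric])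

lemma escaping_lift: "escaping_set \<psi> D F G \<omega> = lift \<omega> -` E"
  unfolding escaping_set_def E_def D_om_inf_def
  by (auto simp: D_om_n_lift fm_iter_lift)

lemma Dn_open: "open (Dn n)"
proof (induction n)
  case 0 then show ?case using D_open by simp
next
  case (Suc n)
  have "Dn (Suc n) = fm -` Dn n \<inter> D" by auto
  then show ?case using fm_cont D_open Suc by (simp add: continuous_on_open_vimage)
qed

lemma Dinf_step: "p \<in> (\<Inter>n. Dn n) \<Longrightarrow> fm p \<in> (\<Inter>n. Dn n) \<and> p \<in> D"
proof -
  assume p: "p \<in> (\<Inter>n. Dn n)"
  have "\<And>n. p \<in> Dn (Suc n)" using p by blast
  then have "\<And>n. fm p \<in> Dn n" by simp
  moreover have "p \<in> Dn 0" using p by blast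
  ultimately show ?thesis by simp
qed

definition hm :: "'a \<times> real \<Rightarrow> 'a \<times> real" where
  "hm p = (if p \<in> D then fm p else p)"

lemma hm_iter: "p \<in> (\<Inter>n. Dn n) \<Longrightarrow> (hm ^^ n) p = (fm ^^ n) p \<and> (fm ^^ n) p \<in> (\<Inter>n. Dn n)"
proof (induction n arbitrary: p)
  case 0 then show ?case by simp
next
  case (Suc n)
  from Dinf_step[OF Suc.prems] have "fm p \<in> (\<Inter>n. Dn n)" "p \<in> D" by auto
  from Suc.IH[OF this(1)] this(2) show ?case
    by (simp add: funpow_Suc_right hm_def del: funpow.simps)
qed

lemma E_step: "p \<in> E \<Longrightarrow> fm p \<in> E"
proof -
  assume p: "p \<in> E"
  then have "p \<in> (\<Inter>n. Dn n)" unfolding E_def by blast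
  from Dinf_step[OF this] have "fm p \<in> (\<Inter>n. Dn n)" by simp
  moreover
  have A: "filterlim (\<lambda>n. snd ((fm ^^ n) p)) at_top sequentially" using p unfolding E_def by blast
  have B: "filterlim (\<lambda>n. snd ((fm ^^ Suc n) p)) at_top sequentially"
    by (rule filterlim_sequentially_Suc[of "\<lambda>n. snd ((fm ^^ n) p)", THEN iffD2, OF A])
  have "(\<lambda>n. snd ((fm ^^ Suc n) p)) = (\<lambda>n. snd ((fm ^^ n) (fm p)))"
    by (simp add: funpow_Suc_right del: funpow.simps)
  with B have "filterlim (\<lambda>n. snd ((fm ^^ n) (fm p))) at_top sequentially" by simp
  ultimately show ?thesis unfolding E_def by blast
qed

lemma E_iter: "p \<in> E \<Longrightarrow> (fm ^^ n) p \<in> E"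
  by (induction n) (auto intro: E_step)

lemma E_D: "p \<in> E \<Longrightarrow> p \<in> D"
  unfolding E_def using Dinf_step by blast

lemma E_pos: "p \<in> E \<Longrightarrow> snd p > 0"
proof -
  assume "p \<in> E"
  then have "p \<in> UNIV \<times> {0<..}" using E_D D_sub by blast
  then show ?thesis by (cases p) auto
qed

lemma hm_meas: "hm \<in> borel_measurable borel"
proof -
  have "(\<lambda>p. if p \<in> D then fm p else p) \<in> borel_measurable borel"
    by (rule borel_measurable_continuous_on_if) (auto intro: fm_cont borel_open D_open continuous_on_id')
  then show ?thesis unfolding hm_def[abs_def] .
qed

lemma hm_iter_meas: "(hm ^^ n) \<in> borel_measurable borel"
  by (induction n) (auto intro: measurable_compose[OF _ hm_meas])

definition Wm :: "'a \<times> real \<Rightarrow> real" where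
  "Wm p = (if p \<in> UNIV \<times> {0<..} then Wp p else 0)"

lemma Wm_meas: "Wm \<in> borel_measurable borel"
  unfolding Wm_def[abs_def]
  by (rule borel_measurable_continuous_on_if) (auto intro!: Wp_cont borel_open open_Times open_greaterThan)

lemma E_alt: "E = (\<Inter>n. Dn n) \<inter> {p \<in> space borel. filterlim (\<lambda>n. snd ((hm ^^ n) p)) at_top sequentially}"
  unfolding E_def using hm_iter by auto

lemma E_borel: "E \<in> sets borel"
proof -
  have "(\<Inter>n. Dn n) \<in> sets borel" using Dn_open by auto
  moreover have "{p \<in> space borel. filterlim (\<lambda>n. snd ((hm ^^ n) p)) at_top sequentially} \<in> sets borel"
    by (rule sets_filterlim_at_top, rule measurable_compose[OF hm_iter_meas],
        rule borel_measurable_continuous_onI, intro continuous_intros)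
  ultimately show ?thesis unfolding E_alt by auto
qed

lemma sets_prodM:
  fixes N :: "'b::second_countable_topology measure"
  assumes "sets N = sets borel"
  shows "sets (\<mu> \<Otimes>\<^sub>M N) = sets (borel :: ('a \<times> 'b) measure)"
proof -
  obtain Ba :: "'a set set" where a: "countable Ba" "topological_basis Ba"
    using countable_basis_compact[OF compact_Omega] by blast
  obtain Bb :: "'b set set" where b: "countable Bb" "topological_basis Bb"
    using ex_countable_basis by blast
  have "sets (\<mu> \<Otimes>\<^sub>M N) = sets (borel \<Otimes>\<^sub>M borel)"
    using haar_sets assms by (rule sets_pair_measure_cong)
  also have "\<dots> = sets (borel :: ('a \<times> 'b) measure)" by (rule sets_borel_prod_basis[OF a b])
  finally show ?thesis .
qed

lemma sets_prod: "sets (\<mu> \<Otimes>\<^sub>M (lborel::real measure)) = sets (borel :: ('a \<times> real) measure)"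
  by (rule sets_prodM) simp

end

context setting
begin

lemma open_sigma_compact:
  assumes U: "open U" "U \<subseteq> D"
  shows "\<exists>K::nat \<Rightarrow> ('a \<times> real) set. (\<forall>m. compact (K m)) \<and> U = (\<Union>m. K m)"
proof -
  define K where "K m = (UNIV \<times> {1 / Suc m .. real (Suc m)}) \<inter> - (\<Union>q\<in>-U. ball q (1 / Suc m))" for m
  have "compact (K m)" for m
  proof -
    have "compact ((UNIV :: 'a set) \<times> {1 / Suc m .. real (Suc m)})"
      by (rule compact_Times[OF compact_Omega compact_Icc])
    moreover have "closed (- (\<Union>q\<in>-U. ball q (1 / Suc m)))"
      by (intro closed_Compl open_UN) auto
    ultimately show ?thesis unfolding K_def by (rule compact_Int_closed)
  qed
  moreover have "U = (\<Union>m. K m)"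
  proof
    show "U \<subseteq> (\<Union>m. K m)"
    proof
      fix p assume p: "p \<in> U"
      then obtain e where e: "e > 0" "ball p e \<subseteq> U" using U(1) open_contains_ball by blast
      have sp: "snd p > 0" using p U(2) D_sub by (cases p) auto
      obtain m1 :: nat where m1: "1 / Suc m1 < min e (snd p)"
        using nat_approx_posE[of "min e (snd p)"] e sp by auto
      obtain m2 :: nat where m2: "snd p \<le> real m2" using real_arch_simple by blast
      define m where "m = m1 + m2"
      have "1 / real (Suc m) \<le> 1 / real (Suc m1)"
        unfolding m_def by (intro divide_left_mono) auto
      then have hm: "1 / real (Suc m) < e" "1 / real (Suc m) < snd p" using m1 by auto
      have "snd p \<le> real (Suc m)" using m2 unfolding m_def by simp
      moreover have "p \<notin> (\<Union>q\<in>-U. ball q (1 / Suc m))"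
      proof
        assume "p \<in> (\<Union>q\<in>-U. ball q (1 / Suc m))"
        then obtain q where q: "q \<notin> U" "dist q p < 1 / Suc m" by auto
        then have "q \<in> ball p e" using hm by (simp add: dist_commute)
        with e q show False by blast
      qed
      ultimately have "p \<in> K m" unfolding K_def using hm by (cases p) auto
      then show "p \<in> (\<Union>m. K m)" by blast
    qed
  next
    show "(\<Union>m. K m) \<subseteq> U"
    proof
      fix p assume "p \<in> (\<Union>m. K m)"
      then obtain m where "p \<in> K m" by blast
      then have "p \<notin> ball p (1 / Suc m) \<or> p \<in> U" unfolding K_def by blast
      then show "p \<in> U" by simp
    qed
  qed
  ultimately show ?thesis by blast
qed

lemma open_image_borel:
  assumes U: "open U" "U \<subseteq> D"
  shows "fm ` U \<in> sets borel"
proof -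
  obtain K :: "nat \<Rightarrow> ('a \<times> real) set" where K: "\<And>m. compact (K m)" "U = (\<Union>m. K m)"
    using open_sigma_compact[OF U] by blast
  have "K m \<subseteq> D" for m using K(2) U(2) by blast
  then have "compact (fm ` K m)" for m
    using K(1) by (intro compact_continuous_image continuous_on_subset[OF fm_cont])
  then have "fm ` K m \<in> sets borel" for m by (intro borel_closed compact_imp_closed)
  then have "(\<Union>m. fm ` K m) \<in> sets borel" by auto
  moreover have "fm ` U = (\<Union>m. fm ` K m)" using K(2) by blast
  ultimately show ?thesis by simp
qed

lemma image_borel_aux:
  assumes "X \<in> sets borel"
  shows "fm ` (X \<inter> D) \<in> sets borel"
proof -
  have "X \<in> sigma_sets UNIV {S. open S}" using assms by (simp add: sets_borel)
  then show ?thesis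
  proof (induction rule: sigma_sets.induct)
    case (Basic a)
    then show ?case by (intro open_image_borel) (auto intro: open_Int D_open)
  next
    case Empty then show ?case by simp
  next
    case (Compl a)
    have "(UNIV - a) \<inter> D = D - (a \<inter> D)" by blast
    then have "fm ` ((UNIV - a) \<inter> D) = fm ` (D - (a \<inter> D))" by simp
    also have "\<dots> = fm ` D - fm ` (a \<inter> D)"
      by (rule inj_on_image_set_diff[OF fm_inj]) auto
    finally show ?case using Compl.IH open_image_borel[OF D_open subset_refl] by auto
  next
    case (Union a)
    have "fm ` ((\<Union>i. a i) \<inter> D) = (\<Union>i. fm ` (a i \<inter> D))" by blast
    then show ?case using Union.IH by auto
  qed
qed

lemma image_borel: "B \<in> sets borel \<Longrightarrow> B \<subseteq> D \<Longrightarrow> fm ` B \<in> sets borel"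
  using image_borel_aux[of B] by (simp add: Int_absorb2)

lemma fm_mp: "B \<in> sets borel \<Longrightarrow> B \<subseteq> D \<Longrightarrow> emeasure (\<mu> \<Otimes>\<^sub>M lborel) (fm ` B) = emeasure (\<mu> \<Otimes>\<^sub>M lborel) B"
  using f_mp unfolding fm_def by blast

lemma Dn_D: "Dn n \<subseteq> D"
  by (cases n) auto

lemma iter_image:
  "B \<in> sets borel \<Longrightarrow> B \<subseteq> Dn n \<Longrightarrow>
    (fm ^^ n) ` B \<in> sets borel \<and> emeasure (\<mu> \<Otimes>\<^sub>M lborel) ((fm ^^ n) ` B) = emeasure (\<mu> \<Otimes>\<^sub>M lborel) B"
proof (induction n arbitrary: B)
  case 0 then show ?case by simp
next
  case (Suc n)
  have BD: "B \<subseteq> D" and fB: "fm ` B \<subseteq> Dn n" using Suc.prems(2) by auto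
  have fBb: "fm ` B \<in> sets borel" using image_borel[OF Suc.prems(1) BD] .
  have eq: "(fm ^^ Suc n) ` B = (fm ^^ n) ` (fm ` B)"
    by (simp add: funpow_Suc_right image_comp del: funpow.simps)
  show ?case using Suc.IH[OF fBb fB] fm_mp[OF Suc.prems(1) BD] unfolding eq by simp
qed

lemma iter_inj: "inj_on (fm ^^ n) (Dn n)"
proof (induction n)
  case 0 then show ?case by simp
next
  case (Suc n)
  show ?case
  proof (rule inj_onI)
    fix x y assume x: "x \<in> Dn (Suc n)" and y: "y \<in> Dn (Suc n)" and eq: "(fm ^^ Suc n) x = (fm ^^ Suc n) y"
    from eq have "(fm ^^ n) (fm x) = (fm ^^ n) (fm y)"
      by (simp add: funpow_Suc_right del: funpow.simps)
    then have "fm x = fm y" using Suc.IH x y by (auto dest: inj_onD)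
    then show "x = y" using fm_inj x y by (auto dest: inj_onD)
  qed
qed

lemma E_Dn: "E \<subseteq> Dn n"
  unfolding E_def by blast

end

context setting
begin

abbreviation PM where "PM \<equiv> \<mu> \<Otimes>\<^sub>M (lborel :: real measure)"

lemma k_nonneg: "x > 0 \<Longrightarrow> 0 \<le> k x"
proof -
  assume x: "x > 0"
  have "eventually (\<lambda>y. k y \<le> k x) at_top"
    unfolding eventually_at_top_linorder
  proof (intro exI[of _ x] allI impI)
    fix y assume "x \<le> y"
    then show "k y \<le> k x" using k_decr x by (auto intro: monotone_onD)
  qed
  from tendsto_upperbound[OF k_lim this] show ?thesis by simp
qed

lemma k_bound: "\<exists>Kb. \<forall>x>0. k x \<le> Kb"
proof -
  from k_bdd obtain a where "\<forall>y\<in>k ` {0<..}. norm y \<le> a" unfolding bounded_iff by blast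
  then have "\<forall>x>0. k x \<le> a"
  proof (intro allI impI)
    fix x :: real assume "\<forall>y\<in>k ` {0<..}. norm y \<le> a" "0 < x"
    then have "\<bar>k x\<bar> \<le> a" by auto
    then show "k x \<le> a" by simp
  qed
  then show ?thesis by blast
qed

lemma W1_bound: "\<exists>Mw. \<forall>\<omega>. \<bar>W \<omega> 1\<bar> \<le> Mw"
proof -
  have "compact ((\<lambda>\<omega>. W \<omega> 1) ` UNIV)"
    by (rule compact_continuous_image[OF W_cont_omega compact_Omega]) simp
  then have "bounded ((\<lambda>\<omega>. W \<omega> 1) ` UNIV)" by (rule compact_imp_bounded)
  then obtain a where "\<forall>y\<in>(\<lambda>\<omega>. W \<omega> 1) ` UNIV. norm y \<le> a" unfolding bounded_iff by blast
  then show ?thesis by auto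
qed

definition Kb where "Kb = (SOME Kb. \<forall>x>0. k x \<le> Kb)"
definition Mw where "Mw = (SOME Mw. \<forall>\<omega>. \<bar>W \<omega> 1\<bar> \<le> Mw)"

lemma Kb: "x > 0 \<Longrightarrow> k x \<le> Kb"
  using someI_ex[OF k_bound] unfolding Kb_def by blast

lemma Mw: "\<bar>W \<omega> 1\<bar> \<le> Mw"
  using someI_ex[OF W1_bound] unfolding Mw_def by blast

lemma W_upper: "r > 0 \<Longrightarrow> W \<omega> r \<le> Mw + \<delta> * r"
proof -
  assume r: "r > 0"
  show ?thesis
  proof (cases "1 \<le> r")
    case True
    from W_incr[OF _ True, of \<omega>] have "W \<omega> r - W \<omega> 1 \<le> \<delta> * (r - 1)" by simp
    then show ?thesis using Mw[of \<omega>] delta_pos by (simp add: algebra_simps)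
  next
    case False
    then have "r \<le> 1" by simp
    from W_incr[OF r this, of \<omega>] have "\<beta> * (1 - r) \<le> W \<omega> 1 - W \<omega> r" by simp
    moreover have "0 \<le> \<beta> * (1 - r)" using beta_pos \<open>r \<le> 1\<close> by simp
    moreover have "0 \<le> \<delta> * r" using delta_pos r by simp
    ultimately show ?thesis using Mw[of \<omega>] by linarith
  qed
qed

lemma W_lower: "1 \<le> r \<Longrightarrow> W \<omega> r \<ge> - Mw + \<beta> * (r - 1)"
proof -
  assume r: "1 \<le> r"
  from W_incr[OF _ r, of \<omega>] have "\<beta> * (r - 1) \<le> W \<omega> r - W \<omega> 1" by simp
  then show ?thesis using Mw[of \<omega>] by linarith
qed

lemma W_sep: "0 < r \<Longrightarrow> 0 < s \<Longrightarrow> \<beta> * \<bar>s - r\<bar> \<le> \<bar>W \<omega> s - W \<omega> r\<bar>"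
proof -
  assume r: "0 < r" and s: "0 < s"
  show ?thesis
  proof (cases "r \<le> s")
    case True
    from W_incr[OF r True, of \<omega>] have "\<beta> * (s - r) \<le> W \<omega> s - W \<omega> r" by simp
    moreover have "0 \<le> \<beta> * (s - r)" using beta_pos True by simp
    ultimately show ?thesis using True by simp
  next
    case False
    then have "s \<le> r" by simp
    from W_incr[OF s this, of \<omega>] have "\<beta> * (r - s) \<le> W \<omega> r - W \<omega> s" by simp
    moreover have "0 \<le> \<beta> * (r - s)" using beta_pos \<open>s \<le> r\<close> by simp
    ultimately show ?thesis using \<open>s \<le> r\<close> by simp
  qed
qed

lemma W_step: "p \<in> D \<Longrightarrow> Wp (fm p) \<le> Wp p + k (snd p)"
  using W_ineq[of "fst p" "snd p"] by (cases p) (simp add: Wp_def fm_def)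

lemma E_Wp_tendsto: "p \<in> E \<Longrightarrow> eventually (\<lambda>n. T < Wp ((fm ^^ n) p)) sequentially"
proof -
  assume p: "p \<in> E"
  then have lim: "filterlim (\<lambda>n. snd ((fm ^^ n) p)) at_top sequentially" unfolding E_def by blast
  define Z where "Z = max 1 (1 + (\<bar>T\<bar> + Mw + 1) / \<beta>)"
  have "eventually (\<lambda>n. Z \<le> snd ((fm ^^ n) p)) sequentially"
    using lim unfolding filterlim_at_top by blast
  then show ?thesis
  proof (rule eventually_mono)
    fix n assume "Z \<le> snd ((fm ^^ n) p)"
    then have h1: "1 \<le> snd ((fm ^^ n) p)" and h2: "1 + (\<bar>T\<bar> + Mw + 1) / \<beta> \<le> snd ((fm ^^ n) p)"
      unfolding Z_def by auto
    from h2 have "(\<bar>T\<bar> + Mw + 1) / \<beta> \<le> snd ((fm ^^ n) p) - 1" by simp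
    then have "\<bar>T\<bar> + Mw + 1 \<le> \<beta> * (snd ((fm ^^ n) p) - 1)"
      using beta_pos by (simp add: field_simps)
    moreover have "W (fst ((fm ^^ n) p)) (snd ((fm ^^ n) p)) \<ge> - Mw + \<beta> * (snd ((fm ^^ n) p) - 1)"
      by (rule W_lower[OF h1])
    ultimately show "T < Wp ((fm ^^ n) p)" unfolding Wp_def by linarith
  qed
qed

definition L :: "real \<Rightarrow> ('a \<times> real) set" where
  "L T = {p \<in> E. Wp p \<le> T \<and> (\<forall>n\<ge>1. T < Wp ((fm ^^ n) p))}"

lemma L_E: "L T \<subseteq> E" unfolding L_def by blast

lemma last_exit:
  assumes p: "p \<in> E" and T: "Wp p \<le> T"
  shows "\<exists>n. (fm ^^ n) p \<in> L T"
proof -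
  define S where "S = {n. Wp ((fm ^^ n) p) \<le> T}"
  from E_Wp_tendsto[OF p, of T] obtain N where N: "\<And>n. n \<ge> N \<Longrightarrow> T < Wp ((fm ^^ n) p)"
    unfolding eventually_sequentially by blast
  have "S \<subseteq> {..<N}" unfolding S_def using N by (auto simp: not_le[symmetric])
  then have fin: "finite S" by (rule finite_subset) simp
  have "0 \<in> S" unfolding S_def using T by simp
  define n0 where "n0 = Max S"
  have n0S: "n0 \<in> S" unfolding n0_def using fin \<open>0 \<in> S\<close> by (intro Max_in) auto
  have "(fm ^^ n0) p \<in> L T"
    unfolding L_def
  proof (intro CollectI conjI allI impI)
    show "(fm ^^ n0) p \<in> E" by (rule E_iter[OF p])
    show "Wp ((fm ^^ n0) p) \<le> T" using n0S unfolding S_def by simp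
    fix j :: nat assume j: "1 \<le> j"
    have "j + n0 \<notin> S"
    proof
      assume "j + n0 \<in> S"
      then show False using Max_ge[OF fin, of "j + n0"] j unfolding n0_def by simp
    qed
    then have "T < Wp ((fm ^^ (j + n0)) p)" unfolding S_def by simp
    then show "T < Wp ((fm ^^ j) ((fm ^^ n0) p))" by (simp add: funpow_add)
  qed
  then show ?thesis by blast
qed

lemma Wm_eq: "snd p > 0 \<Longrightarrow> Wm p = Wp p"
  unfolding Wm_def by (cases p) auto

lemma L_alt: "L T = E \<inter> {p \<in> space borel. Wm p \<le> T \<and> (\<forall>n::nat. 1 \<le> n \<longrightarrow> T < Wm ((hm ^^ n) p))}"
proof -
  have key: "p \<in> E \<Longrightarrow> Wm ((hm ^^ n) p) = Wp ((fm ^^ n) p)" for p n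
  proof -
    assume p: "p \<in> E"
    then have "p \<in> (\<Inter>n. Dn n)" unfolding E_def by blast
    then have "(hm ^^ n) p = (fm ^^ n) p" using hm_iter by blast
    moreover have "snd ((fm ^^ n) p) > 0" using E_pos[OF E_iter[OF p]] .
    ultimately show ?thesis using Wm_eq by simp
  qed
  have key0: "p \<in> E \<Longrightarrow> Wm p = Wp p" for p using key[of p 0] by simp
  show ?thesis unfolding L_def using key key0 by (auto simp del: funpow.simps)
qed

lemma L_borel: "L T \<in> sets borel"
proof -
  have [measurable]: "Wm \<in> borel_measurable borel" by (rule Wm_meas)
  have [measurable]: "(\<lambda>p. Wm ((hm ^^ n) p)) \<in> borel_measurable borel" for n
    by (rule measurable_compose[OF hm_iter_meas Wm_meas])
  have "{p \<in> space borel. Wm p \<le> T \<and> (\<forall>n::nat. 1 \<le> n \<longrightarrow> T < Wm ((hm ^^ n) p))} \<in> sets borel"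
    by measurable
  then show ?thesis unfolding L_alt using E_borel by auto
qed

end

context setting
begin

definition band :: "real \<Rightarrow> real \<Rightarrow> ('a \<times> real) set" where
  "band a b = {p. snd p > 0 \<and> a < Wp p \<and> Wp p \<le> b}"

lemma band_borel: "band a b \<in> sets borel"
proof -
  have [measurable]: "Wm \<in> borel_measurable borel" by (rule Wm_meas)
  have o: "UNIV \<times> {0<..} \<in> sets (borel :: ('a \<times> real) measure)"
    by (intro borel_open open_Times open_greaterThan open_UNIV)
  have "{p \<in> space borel. a < Wm p \<and> Wm p \<le> b} \<in> sets borel" by measurable
  with o have "(UNIV \<times> {0<..}) \<inter> {p \<in> space borel. a < Wm p \<and> Wm p \<le> b} \<in> sets borel" by auto
  moreover have "band a b = (UNIV \<times> {0<..}) \<inter> {p \<in> space borel. a < Wm p \<and> Wm p \<le> b}"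
    unfolding band_def using Wm_eq by (auto simp: mem_Times_iff)
  ultimately show ?thesis by simp
qed

lemma band_measure:
  assumes ab: "a \<le> b"
  shows "emeasure PM (band a b) \<le> ennreal (2 * (b - a) / \<beta>)"
proof -
  interpret prob_space \<mu> by (rule haar_prob)
  interpret P: pair_sigma_finite \<mu> "lborel :: real measure" ..
  have bs: "band a b \<in> sets PM" using band_borel sets_prod by simp
  have slice: "emeasure lborel (Pair \<omega> -` band a b) \<le> ennreal (2 * (b - a) / \<beta>)" for \<omega>
  proof (cases "Pair \<omega> -` band a b = {}")
    case True then show ?thesis by simp
  next
    case False
    then obtain r0 where r0: "r0 \<in> Pair \<omega> -` band a b" by blast
    have sub: "Pair \<omega> -` band a b \<subseteq> {r0 - (b - a) / \<beta> .. r0 + (b - a) / \<beta>}"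
    proof
      fix r assume r: "r \<in> Pair \<omega> -` band a b"
      have h: "0 < r" "a < W \<omega> r" "W \<omega> r \<le> b" "0 < r0" "a < W \<omega> r0" "W \<omega> r0 \<le> b"
        using r r0 unfolding band_def Wp_def by auto
      have "\<bar>W \<omega> r - W \<omega> r0\<bar> \<le> b - a" using h by arith
      moreover have "\<beta> * \<bar>r - r0\<bar> \<le> \<bar>W \<omega> r - W \<omega> r0\<bar>" using W_sep[OF h(4) h(1)] .
      ultimately have "\<beta> * \<bar>r - r0\<bar> \<le> b - a" by linarith
      then have "\<bar>r - r0\<bar> \<le> (b - a) / \<beta>" using beta_pos by (simp add: field_simps)
      then show "r \<in> {r0 - (b - a) / \<beta> .. r0 + (b - a) / \<beta>}" by (auto simp: abs_le_iff)
    qed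
    have le: "r0 - (b - a) / \<beta> \<le> r0 + (b - a) / \<beta>" using ab beta_pos by simp
    have "emeasure lborel (Pair \<omega> -` band a b) \<le> emeasure lborel {r0 - (b - a) / \<beta> .. r0 + (b - a) / \<beta>}"
      by (rule emeasure_mono[OF sub]) simp
    also have "\<dots> = ennreal (2 * (b - a) / \<beta>)" using le by simp
    finally show ?thesis .
  qed
  have "emeasure PM (band a b) = (\<integral>\<^sup>+\<omega>. emeasure lborel (Pair \<omega> -` band a b) \<partial>\<mu>)"
    by (rule lborel.emeasure_pair_measure_alt[OF bs])
  also have "\<dots> \<le> (\<integral>\<^sup>+\<omega>. ennreal (2 * (b - a) / \<beta>) \<partial>\<mu>)"
    by (rule nn_integral_mono) (rule slice)
  also have "\<dots> = ennreal (2 * (b - a) / \<beta>)" by (simp add: emeasure_space_1)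
  finally show ?thesis .
qed

lemma L_band:
  assumes rho: "0 < (T - Kb - Mw) / \<delta>"
  shows "L T \<subseteq> band (T - k ((T - Kb - Mw) / \<delta>)) T"
proof
  fix q assume q: "q \<in> L T"
  define \<rho> where "\<rho> = (T - Kb - Mw) / \<delta>"
  have qE: "q \<in> E" using q L_E by blast
  have qpos: "snd q > 0" using E_pos[OF qE] .
  have qD: "q \<in> D" using E_D[OF qE] .
  have "T < Wp ((fm ^^ 1) q)" using q unfolding L_def by blast
  then have h1: "T < Wp (fm q)" by simp
  have h2: "Wp (fm q) \<le> Wp q + k (snd q)" by (rule W_step[OF qD])
  have h3: "Wp q \<le> T" using q unfolding L_def by blast
  have "k (snd q) \<le> Kb" using Kb[OF qpos] .
  then have "T - Kb < Wp q" using h1 h2 by linarith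
  moreover have "Wp q \<le> Mw + \<delta> * snd q" unfolding Wp_def by (rule W_upper[OF qpos])
  ultimately have "T - Kb - Mw < \<delta> * snd q" by linarith
  then have "\<rho> < snd q" unfolding \<rho>_def using delta_pos by (simp add: field_simps)
  then have "k (snd q) \<le> k \<rho>" using k_decr rho qpos unfolding \<rho>_def
    by (auto intro: monotone_onD)
  then have "T - k \<rho> < Wp q" using h1 h2 by linarith
  then show "q \<in> band (T - k ((T - Kb - Mw) / \<delta>)) T"
    unfolding band_def \<rho>_def using qpos h3 by simp
qed

lemma L_measure:
  assumes rho: "0 < (T - Kb - Mw) / \<delta>"
  shows "emeasure PM (L T) \<le> ennreal (2 * k ((T - Kb - Mw) / \<delta>) / \<beta>)"
proof -
  have kn: "0 \<le> k ((T - Kb - Mw) / \<delta>)" using k_nonneg[OF rho] .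
  have bs: "band (T - k ((T - Kb - Mw) / \<delta>)) T \<in> sets PM" using band_borel sets_prod by simp
  have "emeasure PM (L T) \<le> emeasure PM (band (T - k ((T - Kb - Mw) / \<delta>)) T)"
    by (rule emeasure_mono[OF L_band[OF rho] bs])
  also have "\<dots> \<le> ennreal (2 * (T - (T - k ((T - Kb - Mw) / \<delta>))) / \<beta>)"
    by (rule band_measure) (use kn in simp)
  finally show ?thesis by simp
qed

end

context setting
begin

lemma iter_pre_borel:
  assumes S: "S \<in> sets borel" and A: "A \<in> sets borel" "A \<subseteq> E"
  shows "{p \<in> A. (fm ^^ n) p \<in> S} \<in> sets borel"
proof -
  have "{p \<in> A. (fm ^^ n) p \<in> S} = A \<inter> ((hm ^^ n) -` S \<inter> space borel)"
    using A(2) hm_iter unfolding E_def by auto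
  moreover have "(hm ^^ n) -` S \<inter> space borel \<in> sets borel"
    by (rule measurable_sets[OF hm_iter_meas S])
  ultimately show ?thesis using A(1) by auto
qed

lemma L_mono:
  assumes cT: "c \<le> T"
  shows "emeasure PM (L c) \<le> emeasure PM (L T)"
proof -
  define A where "A n = {p \<in> L c. (fm ^^ n) p \<in> L T}" for n
  define B where "B n = (fm ^^ n) ` A n" for n
  have Ab: "A n \<in> sets borel" for n
    unfolding A_def by (rule iter_pre_borel[OF L_borel L_borel L_E])
  have AD: "A n \<subseteq> Dn n" for n unfolding A_def using L_E E_Dn by blast
  have Bb: "B n \<in> sets borel" and Bm: "emeasure PM (B n) = emeasure PM (A n)" for n
    using iter_image[OF Ab AD] unfolding B_def by auto
  have BL: "B n \<subseteq> L T" for n unfolding B_def A_def by blast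
  have disj_lt: "B n \<inter> B m = {}" if nm: "n < m" for n m
  proof (rule ccontr)
    assume "B n \<inter> B m \<noteq> {}"
    then obtain p q where p: "p \<in> A n" and q: "q \<in> A m" and eq: "(fm ^^ n) p = (fm ^^ m) q"
      unfolding B_def by blast
    define d where "d = m - n"
    have d1: "1 \<le> d" and md: "m = n + d" using nm unfolding d_def by auto
    have "(fm ^^ m) q = (fm ^^ n) ((fm ^^ d) q)" unfolding md by (simp add: funpow_add)
    with eq have eq2: "(fm ^^ n) p = (fm ^^ n) ((fm ^^ d) q)" by simp
    have qL: "q \<in> L c" using q unfolding A_def by blast
    have pL: "p \<in> L c" using p unfolding A_def by blast
    have "(fm ^^ d) q \<in> E" using E_iter L_E qL by blast
    then have "(fm ^^ d) q \<in> Dn n" using E_Dn by blast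
    moreover have "p \<in> Dn n" using pL L_E E_Dn by blast
    ultimately have "p = (fm ^^ d) q" using iter_inj[of n] eq2 by (auto dest: inj_onD)
    moreover have "c < Wp ((fm ^^ d) q)" using qL d1 unfolding L_def by blast
    moreover have "Wp p \<le> c" using pL unfolding L_def by blast
    ultimately show False by simp
  qed
  have disj: "disjoint_family B"
    unfolding disjoint_family_on_def
  proof (intro ballI impI)
    fix n m :: nat assume "n \<noteq> m"
    then show "B n \<inter> B m = {}"
      using disj_lt[of n m] disj_lt[of m n] by (cases "n < m") auto
  qed
  have cover: "L c \<subseteq> (\<Union>n. A n)"
  proof
    fix p assume p: "p \<in> L c"
    then have pE: "p \<in> E" and "Wp p \<le> c" unfolding L_def by auto
    then have "Wp p \<le> T" using cT by simp
    from last_exit[OF pE this] obtain n where "(fm ^^ n) p \<in> L T" by blast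
    then show "p \<in> (\<Union>n. A n)" using p unfolding A_def by blast
  qed
  have rA: "range A \<subseteq> sets PM" using Ab sets_prod by auto
  have rB: "range B \<subseteq> sets PM" using Bb sets_prod by auto
  have "emeasure PM (L c) \<le> emeasure PM (\<Union>n. A n)"
    by (rule emeasure_mono[OF cover]) (use rA in auto)
  also have "\<dots> \<le> (\<Sum>n. emeasure PM (A n))" by (rule emeasure_subadditive_countably[OF rA])
  also have "\<dots> = (\<Sum>n. emeasure PM (B n))" using Bm by simp
  also have "\<dots> = emeasure PM (\<Union>n. B n)" by (rule suminf_emeasure[OF rB disj])
  also have "\<dots> \<le> emeasure PM (L T)"
    by (rule emeasure_mono) (use BL L_borel sets_prod in auto)
  finally show ?thesis .
qed

lemma L_null: "emeasure PM (L c) = 0"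
proof -
  have H: "emeasure PM (L c) \<le> 0 + ennreal e" if e: "0 < e" for e :: real
  proof -
    have "0 < e * \<beta> / 2" using e beta_pos by simp
    with k_lim have "eventually (\<lambda>x. dist (k x) 0 < e * \<beta> / 2) at_top"
      by (rule tendstoD)
    then obtain R where R: "\<And>x. x \<ge> R \<Longrightarrow> dist (k x) 0 < e * \<beta> / 2"
      unfolding eventually_at_top_linorder by blast
    define T where "T = max c (Kb + Mw + \<delta> * max R 1)"
    have "\<delta> * max R 1 \<le> T - Kb - Mw" unfolding T_def by simp
    then have "max R 1 * \<delta> \<le> T - Kb - Mw" by (simp only: mult.commute)
    then have rho_ge: "max R 1 \<le> (T - Kb - Mw) / \<delta>"
      by (rule pos_le_divide_eq[OF delta_pos, THEN iffD2])
    then have rho: "0 < (T - Kb - Mw) / \<delta>" by linarith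
    have "R \<le> (T - Kb - Mw) / \<delta>" using rho_ge by (rule max.boundedE)
    then have "dist (k ((T - Kb - Mw) / \<delta>)) 0 < e * \<beta> / 2" by (rule R)
    then have "k ((T - Kb - Mw) / \<delta>) < e * \<beta> / 2" by (simp add: dist_real_def)
    then have lt: "2 * k ((T - Kb - Mw) / \<delta>) / \<beta> \<le> e" using beta_pos by (simp add: field_simps)
    have "emeasure PM (L c) \<le> emeasure PM (L T)" by (rule L_mono) (simp add: T_def)
    also have "\<dots> \<le> ennreal (2 * k ((T - Kb - Mw) / \<delta>) / \<beta>)" by (rule L_measure[OF rho])
    also have "\<dots> \<le> ennreal e" using lt by (rule ennreal_leI)
    finally have "emeasure PM (L c) \<le> ennreal e" .
    then show ?thesis by simp
  qed
  have "emeasure PM (L c) \<le> 0"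
  proof (rule ennreal_le_epsilon)
    fix e :: real assume "0 < e" then show "emeasure PM (L c) \<le> 0 + ennreal e" by (rule H)
  qed
  then show ?thesis by simp
qed

lemma E_null: "E \<in> null_sets PM"
proof -
  define Q where "Q c n = {p \<in> E. (fm ^^ n) p \<in> L (real c)}" for c :: nat and n
  have Qb: "Q c n \<in> sets borel" for c n
    unfolding Q_def by (rule iter_pre_borel[OF L_borel E_borel subset_refl])
  have QD: "Q c n \<subseteq> Dn n" for c n unfolding Q_def using E_Dn by blast
  have Qn: "Q c n \<in> null_sets PM" for c n
  proof -
    have "emeasure PM (Q c n) = emeasure PM ((fm ^^ n) ` Q c n)"
      using iter_image[OF Qb QD] by simp
    also have "\<dots> \<le> emeasure PM (L (real c))"
      by (rule emeasure_mono) (use L_borel sets_prod in \<open>auto simp: Q_def\<close>)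
    also have "\<dots> = 0" by (rule L_null)
    finally show ?thesis using Qb sets_prod by (simp add: null_sets_def)
  qed
  have N: "(\<Union>c. \<Union>n. Q c n) \<in> null_sets PM" by (intro null_sets_UN Qn)
  have S:  "E \<subseteq> (\<Union>c. \<Union>n. Q c n)"
  proof
    fix p assume pE: "p \<in> E"
    have "Wp p \<le> real (nat \<lceil>Wp p\<rceil>)" by (rule real_nat_ceiling_ge)
    from last_exit[OF pE this] obtain n where "(fm ^^ n) p \<in> L (real (nat \<lceil>Wp p\<rceil>))" by blast
    then show "p \<in> (\<Union>c. \<Union>n. Q c n)" using pE unfolding Q_def by blast
  qed
  have "E \<in> sets PM" using E_borel sets_prod by simp
  from null_sets_subset[OF N this S] show ?thesis .
qed

end

locale setting2 = setting \<mu> \<psi> D F G W k \<beta> \<delta>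
  for \<mu> :: "'a::{metric_space, ab_group_add} measure"
    and \<psi> :: "real \<Rightarrow> 'a"
    and D :: "('a \<times> real) set"
    and F G :: "'a \<times> real \<Rightarrow> real"
    and W :: "'a \<Rightarrow> real \<Rightarrow> real"
    and k :: "real \<Rightarrow> real"
    and \<beta> \<delta> :: real +
  assumes add_cont: "continuous_on UNIV (\<lambda>(x::'a, y). x + y)"
    and psi_cont: "continuous_on UNIV \<psi>"
begin

definition g :: "real \<Rightarrow> ennreal" where
  "g r = emeasure \<mu> ((\<lambda>x. (x, r)) -` E)"

lemma slice_borel: "(\<lambda>x. (x, r)) -` E \<in> sets (borel :: 'a measure)"
proof -
  have "(\<lambda>x::'a. (x, r)) \<in> borel_measurable borel"
    by (intro borel_measurable_continuous_onI continuous_intros)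
  from measurable_sets[OF this E_borel] show ?thesis by simp
qed

lemma shift_slice: "emeasure \<mu> {x. (x + \<psi> t, r) \<in> E} = g r"
proof -
  have eq: "{x. (x + \<psi> t, r) \<in> E} = (\<lambda>x. - \<psi> t + x) ` ((\<lambda>x. (x, r)) -` E)"
  proof (intro set_eqI iffI)
    fix x assume "x \<in> {x. (x + \<psi> t, r) \<in> E}"
    then show "x \<in> (\<lambda>x. - \<psi> t + x) ` ((\<lambda>x. (x, r)) -` E)"
      by (intro image_eqI[of _ _ "x + \<psi> t"]) (auto simp: algebra_simps)
  next
    fix x assume "x \<in> (\<lambda>x. - \<psi> t + x) ` ((\<lambda>x. (x, r)) -` E)"
    then show "x \<in> {x. (x + \<psi> t, r) \<in> E}" by (auto simp: algebra_simps)
  qed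
  show ?thesis unfolding eq g_def by (rule haar_inv[OF slice_borel])
qed

lemma Theta_cont: "continuous_on UNIV (\<lambda>x::'a \<times> (real \<times> real). (fst x + \<psi> (fst (snd x)), snd (snd x)))"
proof -
  have c1: "continuous_on UNIV (\<lambda>x::'a \<times> (real \<times> real). (fst x, \<psi> (fst (snd x))))"
    by (intro continuous_intros continuous_on_compose2[OF psi_cont]) auto
  have "continuous_on UNIV (\<lambda>x::'a \<times> (real \<times> real). (\<lambda>(x, y). x + y) (fst x, \<psi> (fst (snd x))))"
    by (rule continuous_on_compose2[OF add_cont c1]) auto
  then have "continuous_on UNIV (\<lambda>x::'a \<times> (real \<times> real). fst x + \<psi> (fst (snd x)))" by simp
  then show ?thesis by (intro continuous_intros)
qed

theorem main: "AE \<omega> in \<mu>. escaping_set \<psi> D F G \<omega> \<in> null_sets (lborel :: (real \<times> real) measure)"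
proof -
  interpret prob_space \<mu> by (rule haar_prob)
  interpret P: pair_sigma_finite \<mu> "lborel :: real measure" ..
  interpret P2: pair_sigma_finite \<mu> "lborel :: (real \<times> real) measure" ..
  define S where "S = {x :: 'a \<times> (real \<times> real). (fst x + \<psi> (fst (snd x)), snd (snd x)) \<in> E}"
  have S2: "sets (\<mu> \<Otimes>\<^sub>M (lborel :: (real \<times> real) measure)) = sets (borel :: ('a \<times> (real \<times> real)) measure)"
    by (rule sets_prodM) simp
  have Sb: "S \<in> sets (\<mu> \<Otimes>\<^sub>M (lborel :: (real \<times> real) measure))"
  proof -
    have "(\<lambda>x::'a \<times> (real \<times> real). (fst x + \<psi> (fst (snd x)), snd (snd x))) \<in> borel_measurable borel"
      by (rule borel_measurable_continuous_onI[OF Theta_cont])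
    from measurable_sets[OF this E_borel] show ?thesis unfolding S2 S_def by (simp add: vimage_def)
  qed
  have EPM: "E \<in> sets PM" using E_borel sets_prod by simp
  have gm: "g \<in> borel_measurable lborel"
    unfolding g_def[abs_def] by (rule P.measurable_emeasure_Pair2[OF EPM])
  have "(\<integral>\<^sup>+r. g r \<partial>lborel) = emeasure PM E"
    unfolding g_def by (rule P.emeasure_pair_measure_alt2[OF EPM, symmetric])
  also have "\<dots> = 0" using E_null by (simp add: null_sets_def)
  finally have "AE r in lborel. g r = 0" using nn_integral_0_iff_AE[OF gm] by simp
  then obtain N0 where N0: "{r \<in> space lborel. \<not> g r = 0} \<subseteq> N0" "emeasure lborel N0 = 0" "N0 \<in> sets lborel"
    by (rule AE_E)
  have "UNIV \<times> N0 \<in> null_sets ((lborel :: real measure) \<Otimes>\<^sub>M lborel)"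
    using N0 by (intro lborel.times_in_null_sets2) auto
  then have "UNIV \<times> N0 \<in> null_sets (lborel :: (real \<times> real) measure)" by (simp add: lborel_prod)
  then have AEy: "AE y in (lborel :: (real \<times> real) measure). g (snd y) = 0"
    by (rule AE_I') (use N0(1) in auto)
  have "emeasure (\<mu> \<Otimes>\<^sub>M (lborel :: (real \<times> real) measure)) S
      = (\<integral>\<^sup>+y. emeasure \<mu> ((\<lambda>x. (x, y)) -` S) \<partial>(lborel :: (real \<times> real) measure))"
    by (rule P2.emeasure_pair_measure_alt2[OF Sb])
  also have "\<dots> = (\<integral>\<^sup>+y. g (snd y) \<partial>(lborel :: (real \<times> real) measure))"
  proof (rule nn_integral_cong)
    fix y :: "real \<times> real"
    obtain t r where y: "y = (t, r)" by (cases y)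
    have "(\<lambda>x. (x, y)) -` S = {x. (x + \<psi> t, r) \<in> E}" unfolding S_def y by auto
    then show "emeasure \<mu> ((\<lambda>x. (x, y)) -` S) = g (snd y)" using shift_slice y by simp
  qed
  also have "\<dots> = (\<integral>\<^sup>+y. 0 \<partial>(lborel :: (real \<times> real) measure))"
    by (rule nn_integral_cong_AE) (use AEy in simp)
  also have "\<dots> = 0" by simp
  finally have S0: "emeasure (\<mu> \<Otimes>\<^sub>M (lborel :: (real \<times> real) measure)) S = 0" .
  have "(\<integral>\<^sup>+\<omega>. emeasure (lborel :: (real \<times> real) measure) (Pair \<omega> -` S) \<partial>\<mu>) = 0"
    using S0 lborel.emeasure_pair_measure_alt[OF Sb] by simp
  then have "AE \<omega> in \<mu>. emeasure (lborel :: (real \<times> real) measure) (Pair \<omega> -` S) = 0"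
    using nn_integral_0_iff_AE[OF P2.measurable_emeasure_Pair1[OF Sb]] by simp
  then show ?thesis
  proof (rule eventually_mono)
    fix \<omega> assume h: "emeasure (lborel :: (real \<times> real) measure) (Pair \<omega> -` S) = 0"
    have eq: "Pair \<omega> -` S = escaping_set \<psi> D F G \<omega>"
      unfolding escaping_lift S_def lift_def by auto
    have "Pair \<omega> -` S \<in> sets (lborel :: (real \<times> real) measure)" by (rule sets_Pair1[OF Sb])
    with h show "escaping_set \<psi> D F G \<omega> \<in> null_sets lborel" unfolding eq by auto
  qed
qed

end

theorem theorem3p1:
  fixes \<mu> :: "'a::{metric_space, ab_group_add} measure"
    and \<psi> :: "real \<Rightarrow> 'a"
    and D :: "('a \<times> real) set"
    and F G :: "'a \<times> real \<Rightarrow> real"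
    and W :: "'a \<Rightarrow> real \<Rightarrow> real"
    and k :: "real \<Rightarrow> real"
    and \<beta> \<delta> :: real
  assumes compact_Omega: "compact (UNIV :: 'a set)"
    and add_cont: "continuous_on UNIV (\<lambda>(x::'a, y). x + y)"
    and minus_cont: "continuous_on UNIV (uminus :: 'a \<Rightarrow> 'a)"
    and psi_cont: "continuous_on UNIV \<psi>"
    and psi_hom: "\<And>s t. \<psi> (s + t) = \<psi> s + \<psi> t"
    and psi_dense: "closure (range \<psi>) = UNIV"
    and haar_prob: "prob_space \<mu>"
    and haar_sets: "sets \<mu> = sets borel"
    and haar_inv: "\<And>a A. A \<in> sets borel \<Longrightarrow> emeasure \<mu> ((\<lambda>x. a + x) ` A) = emeasure \<mu> A"
    and D_open: "open D"
    and D_sub: "D \<subseteq> UNIV \<times> {0<..}"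
    and F_cont: "continuous_on D F"
    and G_cont: "continuous_on D G"
    and f_maps: "\<And>\<omega> r. (\<omega>, r) \<in> D \<Longrightarrow> r + G (\<omega>, r) > 0"
    and f_cont: "continuous_on D (\<lambda>(\<omega>, r). (\<omega> + \<psi> (F (\<omega>, r)), r + G (\<omega>, r)))"
    and f_inj: "inj_on (\<lambda>(\<omega>, r). (\<omega> + \<psi> (F (\<omega>, r)), r + G (\<omega>, r))) D"
    and f_mp: "\<And>B. B \<in> sets (borel :: ('a \<times> real) measure) \<Longrightarrow> B \<subseteq> D \<Longrightarrow>
        emeasure (\<mu> \<Otimes>\<^sub>M lborel) ((\<lambda>(\<omega>, r). (\<omega> + \<psi> (F (\<omega>, r)), r + G (\<omega>, r))) ` B)
          = emeasure (\<mu> \<Otimes>\<^sub>M lborel) B"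
    and W_C1: "C1_psi_half \<psi> W"
    and beta_pos: "\<beta> > 0" and delta_pos: "\<delta> > 0"
    and W_r_bounds: "\<And>\<omega> r. r > 0 \<Longrightarrow> \<beta> \<le> deriv (W \<omega>) r \<and> deriv (W \<omega>) r \<le> \<delta>"
    and W_ineq: "\<And>\<omega> r. (\<omega>, r) \<in> D \<Longrightarrow>
        W (\<omega> + \<psi> (F (\<omega>, r))) (r + G (\<omega>, r)) \<le> W \<omega> r + k r"
    and k_decr: "antimono_on {0<..} k"
    and k_bdd: "bounded (k ` {0<..})"
    and k_lim: "(k \<longlongrightarrow> 0) at_top"
  shows "AE \<omega> in \<mu>. escaping_set \<psi> D F G \<omega> \<in> null_sets (lborel :: (real \<times> real) measure)"
  proof -
  interpret setting2 \<mu> \<psi> D F G W k \<beta> \<delta>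
    apply (rule setting2.intro)
     apply (rule setting.intro[OF compact_Omega psi_hom haar_prob haar_sets _ D_open D_sub f_maps
        f_cont f_inj f_mp W_C1 beta_pos delta_pos W_r_bounds W_ineq k_decr k_bdd k_lim])
     apply (rule haar_inv)
     apply assumption+
    apply (rule setting2_axioms.intro[OF add_cont psi_cont])
    done
  show ?thesis by (rule main)
qed

end
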